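(* Let $\overline{F}(x) = 1$ for $x < 2$ and $\overline{F}(x) = 2^{-\lfloor \log_2 x \rfloor}$ for $x \geq 2$, and let $\theta \in (0,1)$. Then $\theta\, \overline{F}(x) \leq \overline{F}(x/\theta)$ holds for all $x \geq 0$ if and only if $\theta \in \{2^{-k} : k \in \{1,2,3,\dots\}\}$. *)

theory Defs
  imports Complex_Main
begin

definition Fbar :: "real \<Rightarrow> real" where
  "Fbar x = (if x < 2 then 1 else 2 powr (- real_of_int \<lfloor>log 2 x\<rfloor>))"

end

theory Submission
  imports Defs
begin

lemma Fbar_pos:
  assumes "x > 0"
  shows "Fbar x = 2 powr (- real_of_int (max 0 \<lfloor>log 2 x\<rfloor>))"
proof (cases "x < 2")
  case True
  have "log 2 x < 1" using True assms by (simp add: log_less_iff)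
  then have "\<lfloor>log 2 x\<rfloor> \<le> 0" by linarith
  then show ?thesis using True by (simp add: Fbar_def)
next
  case False
  have "log 2 x \<ge> 1" using False assms by (simp add: le_log_iff)
  then have "\<lfloor>log 2 x\<rfloor> \<ge> 1" by linarith
  then show ?thesis using False by (simp add: Fbar_def)
qed

theorem lemma14:
  fixes \<theta> :: real
  assumes "0 < \<theta>" and "\<theta> < 1"
  shows "(\<forall>x::real. x \<ge> 0 \<longrightarrow> \<theta> * Fbar x \<le> Fbar (x / \<theta>))
         \<longleftrightarrow> (\<exists>k::nat. k \<ge> 1 \<and> \<theta> = 2 powr (- real k))"
proof
  assume H: "\<forall>x::real. x \<ge> 0 \<longrightarrow> \<theta> * Fbar x \<le> Fbar (x / \<theta>)"
  define s where "s = - log 2 \<theta>"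
  have s0: "s > 0" using assms by (simp add: s_def)
  define k where "k = nat \<lfloor>s\<rfloor>"
  have kk: "real k \<le> s" "s < real k + 1" using s0 by (auto simp: k_def)
  have th: "\<theta> = 2 powr (- s)" using assms by (simp add: s_def)
  show "\<exists>k::nat. k \<ge> 1 \<and> \<theta> = 2 powr (- real k)"
  proof (cases "s = real k")
    case True
    then have "k \<ge> 1" using s0 by simp
    then show ?thesis using True th by auto
  next
    case False
    then have sl: "real k < s" using kk by simp
    define x where "x = \<theta> * 2 powr (real k + 2)"
    have x0: "x > 0" using assms by (simp add: x_def)
    have lx: "log 2 x = real k + 2 - s"
      using assms by (simp add: x_def s_def log_mult)
    have "\<lfloor>log 2 x\<rfloor> = 1" unfolding lx using sl kk by linarith
    then have F1: "Fbar x = 2 powr (-1)" using Fbar_pos[OF x0] by simp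
    have "x / \<theta> = 2 powr (real k + 2)" using assms by (simp add: x_def)
    then have "log 2 (x / \<theta>) = real k + 2" by simp
    then have "\<lfloor>log 2 (x / \<theta>)\<rfloor> = int k + 2" by simp
    then have F2: "Fbar (x / \<theta>) = 2 powr (- (real k + 2))"
      using Fbar_pos[of "x/\<theta>"] x0 assms by simp
    have "\<theta> * Fbar x = 2 powr (- s) * 2 powr (-1)" using th F1 by simp
    also have "\<dots> = 2 powr (- s - 1)" by (metis powr_add diff_conv_add_uminus)
    also have "\<dots> > 2 powr (- (real k + 2))" using kk by simp
    finally have "\<theta> * Fbar x > Fbar (x / \<theta>)" using F2 by simp
    moreover have "\<theta> * Fbar x \<le> Fbar (x / \<theta>)" using H x0 by simp
    ultimately show ?thesis by simp
  qed
next
  assume "\<exists>k::nat. k \<ge> 1 \<and> \<theta> = 2 powr (- real k)"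
  then obtain k :: nat where th: "\<theta> = 2 powr (- real k)" by blast
  show "\<forall>x::real. x \<ge> 0 \<longrightarrow> \<theta> * Fbar x \<le> Fbar (x / \<theta>)"
  proof (intro allI impI)
    fix x :: real assume "x \<ge> 0"
    show "\<theta> * Fbar x \<le> Fbar (x / \<theta>)"
    proof (cases "x = 0")
      case True
      then show ?thesis using assms by (simp add: Fbar_def)
    next
      case False
      then have x0: "x > 0" using \<open>x \<ge> 0\<close> by simp
      have "log 2 (x / \<theta>) = log 2 x + real k"
        using x0 th by (simp add: log_divide)
      then have fl: "\<lfloor>log 2 (x / \<theta>)\<rfloor> = \<lfloor>log 2 x\<rfloor> + int k"
        by (metis floor_add_int of_int_of_nat_eq)
      have "\<theta> * Fbar x = 2 powr (- real k - real_of_int (max 0 \<lfloor>log 2 x\<rfloor>))"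
        using th Fbar_pos[OF x0] by (simp add: powr_add[symmetric])
      also have "\<dots> \<le> 2 powr (- real_of_int (max 0 (\<lfloor>log 2 x\<rfloor> + int k)))"
        by (intro powr_mono) auto
      also have "\<dots> = Fbar (x / \<theta>)"
        using Fbar_pos[of "x/\<theta>"] x0 assms fl by simp
      finally show ?thesis .
    qed
  qed
qed

end
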